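(* Let $T\in\mathbb{N}$, $\beta_1,\dots,\beta_T\in(0,1)$, $\alpha_t=1-\beta_t$, $\bar\alpha_t=\prod_{i=1}^t\alpha_i$, and let $\sigma_t\ge0$ with $1-\bar\alpha_{t-1}-\sigma_t^2\ge0$ for $t=2,\dots,T$. Fix vectors $\bm y_0,\bm f\in\mathbb{R}^d$ (here $\bm f=f_\phi(\bm c)$ is the output of a fixed pre-trained regressor at the covariate $\bm c$). Define a joint distribution of $\bm y_1,\dots,\bm y_T$ given $\bm y_0$ by $$p(\bm y_T\mid\bm y_0)=\mathcal{N}\big(\sqrt{\bar\alpha_T}\bm y_0+(1-\sqrt{\bar\alpha_T})\bm f,\ (1-\bar\alpha_T)\mathbf{I}\big)$$ and, for $t=T,\dots,2$, $p(\bm y_{t-1}\mid\bm y_t,\bm y_0)=\mathcal{N}(\bm\mu(\bm y_0,\bm y_t),\sigma_t^2\mathbf{I})$ with $$\bm\mu(\bm y_0,\bm y_t)=\sqrt{\bar\alpha_{t-1}}\bm y_0+(1-\sqrt{\bar\alpha_{t-1}})\bm f+\sqrt{1-\bar\alpha_{t-1}-\sigma_t^2}\,\frac{\bm y_t-\big(\sqrt{\bar\alpha_t}\bm y_0+(1-\sqrt{\bar\alpha_t})\bm f\big)}{\sqrt{1-\bar\alpha_t}}.$$ Then for every $t=1,\dots,T$, $$p(\bm y_t\mid\bm y_0)=\mathcal{N}\big(\sqrt{\bar\alpha_t}\bm y_0+(1-\sqrt{\bar\alpha_t})\bm f,\ (1-\bar\alpha_t)\mathbf{I}\big).$$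
   Context: This is the CARD (classification and regression diffusion) model written in the DDIM framework, where the diffusion interpolates between the data distribution and $\mathcal{N}(f_\phi(\bm c),\mathbf{I})$. *)

theory Defs
  imports "HOL-Probability.Probability"
begin

definition iso_normal :: "real^'d \<Rightarrow> real \<Rightarrow> (real^'d) measure" where
  "iso_normal m v = (if v = 0 then return lborel m
     else density lborel (\<lambda>x. \<Prod>i\<in>UNIV. normal_density (m $ i) (sqrt v) (x $ i)))"

definition alpha_bar :: "(nat \<Rightarrow> real) \<Rightarrow> nat \<Rightarrow> real" where
  "alpha_bar \<beta> t = (\<Prod>i\<in>{1..t}. 1 - \<beta> i)"

definition card_mean :: "(nat \<Rightarrow> real) \<Rightarrow> real^'d \<Rightarrow> real^'d \<Rightarrow> nat \<Rightarrow> real^'d" where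
  "card_mean \<beta> y0 f t = sqrt (alpha_bar \<beta> t) *\<^sub>R y0 + (1 - sqrt (alpha_bar \<beta> t)) *\<^sub>R f"

definition card_mu :: "(nat \<Rightarrow> real) \<Rightarrow> (nat \<Rightarrow> real) \<Rightarrow> real^'d \<Rightarrow> real^'d \<Rightarrow> nat \<Rightarrow> real^'d \<Rightarrow> real^'d" where
  "card_mu \<beta> \<sigma> y0 f t yt = card_mean \<beta> y0 f (t - 1)
     + (sqrt (1 - alpha_bar \<beta> (t - 1) - (\<sigma> t)^2) / sqrt (1 - alpha_bar \<beta> t))
       *\<^sub>R (yt - card_mean \<beta> y0 f t)"

text \<open>ddim_back T ... k is the distribution of y_{T-k} given y0 under the joint
  distribution p(y_T|y0) \<Prod>_t p(y_{t-1}|y_t,y0): it is obtained by marginalising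
  the Markov chain, i.e. composing (bind) the marginal of y_{T-k} with the kernel
  p(y_{T-k-1} | y_{T-k}, y0).\<close>
fun ddim_back :: "nat \<Rightarrow> (nat \<Rightarrow> real) \<Rightarrow> (nat \<Rightarrow> real) \<Rightarrow> real^'d \<Rightarrow> real^'d \<Rightarrow> nat \<Rightarrow> (real^'d) measure" where
  "ddim_back T \<beta> \<sigma> y0 f 0 = iso_normal (card_mean \<beta> y0 f T) (1 - alpha_bar \<beta> T)"
| "ddim_back T \<beta> \<sigma> y0 f (Suc k) =
     ddim_back T \<beta> \<sigma> y0 f k \<bind> (\<lambda>yt. iso_normal (card_mu \<beta> \<sigma> y0 f (T - k) yt) ((\<sigma> (T - k))^2))"

definition ddim_marginal :: "nat \<Rightarrow> (nat \<Rightarrow> real) \<Rightarrow> (nat \<Rightarrow> real) \<Rightarrow> real^'d \<Rightarrow> real^'d \<Rightarrow> nat \<Rightarrow> (real^'d) measure" where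
  "ddim_marginal T \<beta> \<sigma> y0 f t = ddim_back T \<beta> \<sigma> y0 f (T - t)"

end

theory Submission
  imports Defs
begin

lemma nd_int1: "\<sigma> > 0 \<Longrightarrow> (\<integral>\<^sup>+t. ennreal (normal_density \<mu> \<sigma> t) \<partial>lborel) = 1"
  by (subst nn_integral_eq_integral) auto

lemma nd_shift: "normal_density \<mu> \<sigma> x = normal_density 0 \<sigma> (x - \<mu>)"
  by (simp add: normal_density_def)

lemma nd_scale:
  assumes "c \<noteq> 0" "v > 0"
  shows "normal_density \<mu> (sqrt v) (\<mu> + u / c) = \<bar>c\<bar> * normal_density 0 (\<bar>c\<bar> * sqrt v) u"
proof -
  have "c\<^sup>2 > 0" using assms by simp
  have s: "sqrt (2 * pi * (\<bar>c\<bar> * sqrt v)\<^sup>2) = \<bar>c\<bar> * sqrt (2 * pi * v)"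
    using assms by (simp add: power_mult_distrib real_sqrt_mult)
  have e: "(u / c)\<^sup>2 / (2 * v) = u\<^sup>2 / (2 * (\<bar>c\<bar> * sqrt v)\<^sup>2)"
    using assms by (simp add: power_mult_distrib power_divide field_simps)
  show ?thesis
    unfolding normal_density_def using assms
    by (simp add: s e)
qed

lemma conv1:
  assumes v: "v > 0" and s: "s > 0"
  shows "(\<integral>\<^sup>+t. ennreal (normal_density \<mu> (sqrt v) t * normal_density (\<alpha> + c*(t-\<mu>)) s x) \<partial>lborel)
     = ennreal (normal_density \<alpha> (sqrt (c^2 * v + s^2)) x)"
proof (cases "c = 0")
  case True
  have "(\<integral>\<^sup>+t. ennreal (normal_density \<mu> (sqrt v) t * normal_density (\<alpha> + c*(t-\<mu>)) s x) \<partial>lborel)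
     = (\<integral>\<^sup>+t. ennreal (normal_density \<alpha> s x) * ennreal (normal_density \<mu> (sqrt v) t) \<partial>lborel)"
    using True by (intro nn_integral_cong) (simp add: ennreal_mult mult.commute)
  also have "\<dots> = ennreal (normal_density \<alpha> s x)"
    by (subst nn_integral_cmult) (use v in \<open>auto simp: nd_int1\<close>)
  finally show ?thesis using True s by simp
next
  case False
  have "(\<integral>\<^sup>+t. ennreal (normal_density \<mu> (sqrt v) t * normal_density (\<alpha> + c*(t-\<mu>)) s x) \<partial>lborel)
    = \<bar>1/c\<bar> * (\<integral>\<^sup>+u. ennreal (normal_density \<mu> (sqrt v) (\<mu> + (1/c) * u) * normal_density (\<alpha> + c*((\<mu> + (1/c) * u)-\<mu>)) s x) \<partial>lborel)"
    using False by (intro nn_integral_real_affine) (auto simp: normal_density_def)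
  also have "(\<integral>\<^sup>+u. ennreal (normal_density \<mu> (sqrt v) (\<mu> + (1/c) * u) * normal_density (\<alpha> + c*((\<mu> + (1/c) * u)-\<mu>)) s x) \<partial>lborel)
     = (\<integral>\<^sup>+u. ennreal \<bar>c\<bar> * ennreal (normal_density 0 s ((x - \<alpha>) - u) * normal_density 0 (\<bar>c\<bar> * sqrt v) u) \<partial>lborel)"
    apply (intro nn_integral_cong)
    using False v
    apply (simp add: nd_scale[OF False v] ennreal_mult[symmetric])
    apply (rule disjI2)
    apply (simp add: normal_density_def algebra_simps)
    done
  also have "\<dots> = ennreal \<bar>c\<bar> * (\<integral>\<^sup>+u. ennreal (normal_density 0 s ((x - \<alpha>) - u) * normal_density 0 (\<bar>c\<bar> * sqrt v) u) \<partial>lborel)"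
    by (subst nn_integral_cmult) (auto simp: normal_density_def)
  also have "(\<integral>\<^sup>+u. ennreal (normal_density 0 s ((x - \<alpha>) - u) * normal_density 0 (\<bar>c\<bar> * sqrt v) u) \<partial>lborel)
     = ennreal (normal_density 0 (sqrt (s\<^sup>2 + (\<bar>c\<bar> * sqrt v)\<^sup>2)) (x - \<alpha>))"
    using conv_normal_density_zero_mean[of s "\<bar>c\<bar> * sqrt v"] False v s
    by (auto dest: fun_cong[where x="x - \<alpha>"])
  finally show ?thesis
    using False v
    apply (simp add: ennreal_mult[symmetric] power_mult_distrib)
    apply (subst nd_shift[of \<alpha>])
    apply (simp add: ennreal_mult'[symmetric] add.commute)
    done
qed
lemma vn_meas[measurable]: "(\<lambda>x::real^'d. x $ i) \<in> borel_measurable borel"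
  by (intro borel_measurable_continuous_onI continuous_on_component continuous_on_id)

lemma basis_vec_real: "(Basis :: (real^'d) set) = range (\<lambda>i. axis i 1)"
  by (auto simp: Basis_vec_def)

lemma prod_basis_vec: "(\<Prod>b\<in>(Basis::(real^'d) set). h b) = (\<Prod>i\<in>UNIV. h (axis i 1))"
  unfolding basis_vec_real
  by (subst prod.reindex) (auto simp: inj_on_def axis_eq_axis)

definition gd :: "real^'d \<Rightarrow> real \<Rightarrow> real^'d \<Rightarrow> real" where
  "gd m v x = (\<Prod>i\<in>UNIV. normal_density (m$i) (sqrt v) (x$i))"

lemma gd_nonneg: "0 \<le> gd m v x"
  unfolding gd_def by (auto intro: prod_nonneg)

lemma convd:
  fixes m a x :: "real^'d"
  assumes v: "v > 0" and s: "s > 0"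
  shows "(\<integral>\<^sup>+y. ennreal (gd m v y * gd (a + c *\<^sub>R (y - m)) (s^2) x) \<partial>lborel)
     = ennreal (gd a (c^2 * v + s^2) x)"
proof -
  define F where "F b t = ennreal (normal_density (m\<bullet>b) (sqrt v) t * normal_density (a\<bullet>b + c*(t - m\<bullet>b)) s (x\<bullet>b))"
    for b :: "real^'d" and t
  have eq: "ennreal (gd m v y * gd (a + c *\<^sub>R (y - m)) (s^2) x) = (\<Prod>b\<in>Basis. F b (y \<bullet> b))" for y
    unfolding F_def prod_basis_vec gd_def using s
    by (simp add: inner_axis prod.distrib[symmetric] prod_ennreal)
  have "(\<integral>\<^sup>+y. ennreal (gd m v y * gd (a + c *\<^sub>R (y - m)) (s^2) x) \<partial>lborel)
     = (\<integral>\<^sup>+y. (\<Prod>b\<in>Basis. F b (y \<bullet> b)) \<partial>lborel)"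
    by (simp add: eq)
  also have "\<dots> = (\<Prod>b\<in>Basis. (\<integral>\<^sup>+t. F b t \<partial>lborel))"
    by (rule nn_integral_lborel_prod) (auto simp: F_def normal_density_def)
  also have "\<dots> = (\<Prod>b\<in>Basis. ennreal (normal_density (a\<bullet>b) (sqrt (c^2 * v + s^2)) (x\<bullet>b)))"
    unfolding F_def using conv1[OF v s] by simp
  also have "\<dots> = ennreal (gd a (c^2 * v + s^2) x)"
    unfolding gd_def prod_basis_vec
    by (simp add: inner_axis prod_ennreal)
  finally show ?thesis .
qed
lemma gd_meas[measurable]:
  "(\<lambda>(y, x). ennreal (gd (a + c *\<^sub>R (y - m)) w (x::real^'d))) \<in> borel_measurable (borel \<Otimes>\<^sub>M borel)"
  unfolding gd_def normal_density_def by simp measurable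

lemma gd_meas1[measurable]:
  "(\<lambda>x. gd m w (x::real^'d)) \<in> borel_measurable borel"
  unfolding gd_def normal_density_def by measurable

lemma gd_int:
  fixes m :: "real^'d"
  assumes v: "v > 0"
  shows "(\<integral>\<^sup>+x. ennreal (gd m v x) \<partial>lborel) = 1"
proof -
  have "(\<integral>\<^sup>+x. ennreal (gd m v x) \<partial>lborel)
     = (\<integral>\<^sup>+x. (\<Prod>b\<in>Basis. ennreal (normal_density (m\<bullet>b) (sqrt v) (x\<bullet>b))) \<partial>lborel)"
    unfolding gd_def prod_basis_vec by (simp add: inner_axis prod_ennreal)
  also have "\<dots> = (\<Prod>b\<in>(Basis::(real^'d) set). (\<integral>\<^sup>+t. ennreal (normal_density (m\<bullet>b) (sqrt v) t) \<partial>lborel))"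
    by (rule nn_integral_lborel_prod) auto
  also have "\<dots> = 1" using v by (simp add: nd_int1)
  finally show ?thesis .
qed

lemma iso_density: "v > 0 \<Longrightarrow> iso_normal m v = density lborel (\<lambda>x. ennreal (gd m v x))"
  unfolding iso_normal_def gd_def by simp

lemma prob_gd: "v > 0 \<Longrightarrow> prob_space (density lborel (\<lambda>x. ennreal (gd m v x)))"
  by (rule prob_spaceI) (simp add: emeasure_density gd_int)
lemma bind_pos:
  fixes m a :: "real^'d"
  assumes v: "v > 0" and s: "s > 0"
  shows "iso_normal m v \<bind> (\<lambda>y. iso_normal (a + c *\<^sub>R (y - m)) (s^2))
       = iso_normal a (c^2 * v + s^2)"
proof -
  define K where "K y = density lborel (\<lambda>x. ennreal (gd (a + c *\<^sub>R (y - m)) (s^2) x))" for y :: "real^'d"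
  have s2: "s^2 > 0" using s by simp
  have w: "c^2 * v + s^2 > 0" using v s by (simp add: add_nonneg_pos)
  have Kmeas: "K \<in> measurable (density lborel (\<lambda>x. ennreal (gd m v x))) (subprob_algebra lborel)"
  proof (rule measurable_subprob_algebra)
    fix y show "subprob_space (K y)" unfolding K_def
      using prob_gd[OF s2] by (rule prob_space_imp_subprob_space)
  next
    fix y show "sets (K y) = sets lborel" by (simp add: K_def)
  next
    fix A :: "(real^'d) set" assume A: "A \<in> sets lborel"
    show "(\<lambda>y. emeasure (K y) A) \<in> borel_measurable (density lborel (\<lambda>x. ennreal (gd m v x)))"
      unfolding K_def using A by (simp add: emeasure_density) measurable
  qed
  have lhs: "iso_normal m v \<bind> (\<lambda>y. iso_normal (a + c *\<^sub>R (y - m)) (s^2))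
     = density lborel (\<lambda>x. ennreal (gd m v x)) \<bind> K"
    unfolding K_def using v s2 by (simp add: iso_density)
  show ?thesis
    unfolding lhs iso_density[OF w]
  proof (rule measure_eqI)
    show "sets (density lborel (\<lambda>x. ennreal (gd m v x)) \<bind> K) = sets (density lborel (\<lambda>x. ennreal (gd a (c^2 * v + s^2) x)))"
      by (subst sets_bind[where N=lborel]) (auto simp: K_def)
  next
    fix A assume "A \<in> sets (density lborel (\<lambda>x. ennreal (gd m v x)) \<bind> K)"
    then have A[measurable]: "A \<in> sets lborel"
      by (subst (asm) sets_bind[where N=lborel]) (auto simp: K_def)
    have "emeasure (density lborel (\<lambda>x. ennreal (gd m v x)) \<bind> K) A
       = (\<integral>\<^sup>+y. emeasure (K y) A \<partial>density lborel (\<lambda>x. ennreal (gd m v x)))"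
      by (rule emeasure_bind[OF _ Kmeas]) (use A in simp_all)
    also have "\<dots> = (\<integral>\<^sup>+y. ennreal (gd m v y) * (\<integral>\<^sup>+x. ennreal (gd (a + c *\<^sub>R (y - m)) (s^2) x) * indicator A x \<partial>lborel) \<partial>lborel)"
      unfolding K_def using A
      by (subst nn_integral_density) (simp_all add: emeasure_density)
    also have "\<dots> = (\<integral>\<^sup>+y. (\<integral>\<^sup>+x. ennreal (gd m v y) * (ennreal (gd (a + c *\<^sub>R (y - m)) (s^2) x) * indicator A x) \<partial>lborel) \<partial>lborel)"
      by (rule nn_integral_cong) (rule nn_integral_cmult[symmetric], measurable)
    also have "\<dots> = (\<integral>\<^sup>+x. (\<integral>\<^sup>+y. ennreal (gd m v y) * (ennreal (gd (a + c *\<^sub>R (y - m)) (s^2) x) * indicator A x) \<partial>lborel) \<partial>lborel)"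
      by (rule lborel_pair.Fubini') measurable
    also have "\<dots> = (\<integral>\<^sup>+x. (\<integral>\<^sup>+y. ennreal (gd m v y * gd (a + c *\<^sub>R (y - m)) (s^2) x) \<partial>lborel) * indicator A x \<partial>lborel)"
      by (rule nn_integral_cong, subst nn_integral_multc[symmetric])
         (auto simp: ennreal_mult gd_nonneg mult.assoc)
    also have "\<dots> = (\<integral>\<^sup>+x. ennreal (gd a (c^2 * v + s^2) x) * indicator A x \<partial>lborel)"
      by (simp add: convd[OF v s])
    also have "\<dots> = emeasure (density lborel (\<lambda>x. ennreal (gd a (c^2 * v + s^2) x))) A"
      using A by (simp add: emeasure_density)
    finally show "emeasure (density lborel (\<lambda>x. ennreal (gd m v x)) \<bind> K) A = emeasure (density lborel (\<lambda>x. ennreal (gd a (c^2 * v + s^2) x))) A" .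
  qed
qed
lemma nn_integral_affine_vec:
  fixes t :: "real^'d"
  assumes [measurable]: "h \<in> borel_measurable borel" and c: "c \<noteq> 0"
  shows "(\<integral>\<^sup>+x. h x \<partial>lborel) = (\<integral>\<^sup>+y. ennreal (\<bar>c\<bar> ^ CARD('d)) * h (t + c *\<^sub>R y) \<partial>lborel)"
  by (subst lborel_affine[OF c, of t]) (simp add: nn_integral_density nn_integral_distr)

lemma gd_affine:
  fixes m a y :: "real^'d"
  assumes c: "c \<noteq> 0" and v: "v > 0"
  shows "\<bar>c\<bar> ^ CARD('d) * gd a (c^2 * v) (a + c *\<^sub>R (y - m)) = gd m v y"
proof -
  have sq: "sqrt (c^2 * v) = \<bar>c\<bar> * sqrt v" by (simp add: real_sqrt_mult)
  have "\<bar>c\<bar> * normal_density (a$i) (\<bar>c\<bar> * sqrt v) (a$i + c * (y$i - m$i)) = normal_density (m$i) (sqrt v) (y$i)" for i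
  proof -
    have "normal_density (m$i) (sqrt v) (y$i) = normal_density (m$i) (sqrt v) (m$i + (c * (y$i - m$i)) / c)"
      using c by simp
    also have "\<dots> = \<bar>c\<bar> * normal_density 0 (\<bar>c\<bar> * sqrt v) (c * (y$i - m$i))"
      by (rule nd_scale[OF c v])
    finally show ?thesis by (simp add: nd_shift[of "a$i"])
  qed
  then show ?thesis
    unfolding gd_def sq prod_constant[symmetric] prod.distrib[symmetric]
    by simp
qed

lemma bind_zero:
  fixes m a :: "real^'d"
  assumes v: "v > 0" and c: "c \<noteq> 0"
  shows "iso_normal m v \<bind> (\<lambda>y. iso_normal (a + c *\<^sub>R (y - m)) 0)
       = iso_normal a (c^2 * v)"
proof -
  have w: "c^2 * v > 0" using v c by simp
  have fm[measurable]: "(\<lambda>y::real^'d. a + c *\<^sub>R (y - m)) \<in> borel_measurable borel"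
    by (intro borel_measurable_continuous_onI continuous_intros)
  have lhs: "iso_normal m v \<bind> (\<lambda>y. iso_normal (a + c *\<^sub>R (y - m)) 0)
      = distr (density lborel (\<lambda>x. ennreal (gd m v x))) lborel (\<lambda>y. a + c *\<^sub>R (y - m))"
    using v by (simp add: iso_density iso_normal_def bind_return_distr' gd_def)
  show ?thesis
    unfolding lhs iso_density[OF w]
  proof (rule measure_eqI)
    fix A assume "A \<in> sets (distr (density lborel (\<lambda>x. ennreal (gd m v x))) lborel (\<lambda>y. a + c *\<^sub>R (y - m)))"
    then have A[measurable]: "A \<in> sets borel" by simp
    have "emeasure (distr (density lborel (\<lambda>x. ennreal (gd m v x))) lborel (\<lambda>y. a + c *\<^sub>R (y - m))) A
        = (\<integral>\<^sup>+y. ennreal (gd m v y) * indicator A (a + c *\<^sub>R (y - m)) \<partial>lborel)"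
    proof -
      have pre: "(\<lambda>y. a + c *\<^sub>R (y - m)) -` A \<in> sets lborel"
        using measurable_sets[OF fm A] by simp
      show ?thesis
        by (simp add: emeasure_distr emeasure_density[OF _ pre] indicator_def)
    qed
    also have "\<dots> = (\<integral>\<^sup>+y. ennreal (\<bar>c\<bar> ^ CARD('d)) * (ennreal (gd a (c^2 * v) ((a - c *\<^sub>R m) + c *\<^sub>R y)) * indicator A ((a - c *\<^sub>R m) + c *\<^sub>R y)) \<partial>lborel)"
    proof (rule nn_integral_cong)
      fix y :: "real^'d"
      have e: "(a - c *\<^sub>R m) + c *\<^sub>R y = a + c *\<^sub>R (y - m)" by (simp add: algebra_simps)
      show "ennreal (gd m v y) * indicator A (a + c *\<^sub>R (y - m)) = ennreal (\<bar>c\<bar> ^ CARD('d)) * (ennreal (gd a (c^2 * v) ((a - c *\<^sub>R m) + c *\<^sub>R y)) * indicator A ((a - c *\<^sub>R m) + c *\<^sub>R y))"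
      proof -
        have g: "ennreal (gd m v y) = ennreal (\<bar>c\<bar> ^ CARD('d)) * ennreal (gd a (c^2 * v) (a + c *\<^sub>R (y - m)))"
          using gd_affine[OF c v, of a y m] by (simp add: ennreal_mult[symmetric] gd_nonneg)
        show ?thesis unfolding e g by (simp add: mult.assoc)
      qed
    qed
    also have "\<dots> = (\<integral>\<^sup>+x. ennreal (gd a (c^2 * v) x) * indicator A x \<partial>lborel)"
      by (rule nn_integral_affine_vec[symmetric, OF _ c]) measurable
    also have "\<dots> = emeasure (density lborel (\<lambda>x. ennreal (gd a (c^2 * v) x))) A"
      by (simp add: emeasure_density)
    finally show "emeasure (distr (density lborel (\<lambda>x. ennreal (gd m v x))) lborel (\<lambda>y. a + c *\<^sub>R (y - m))) A = emeasure (density lborel (\<lambda>x. ennreal (gd a (c^2 * v) x))) A" .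
  qed simp
qed
lemma bind_gen:
  fixes m a :: "real^'d"
  assumes v: "v > 0" and s: "s \<ge> 0" and w: "c^2 * v + s^2 > 0"
  shows "iso_normal m v \<bind> (\<lambda>y. iso_normal (a + c *\<^sub>R (y - m)) (s^2))
       = iso_normal a (c^2 * v + s^2)"
proof (cases "s = 0")
  case True
  then have "c \<noteq> 0" using w by auto
  then show ?thesis using bind_zero[OF v \<open>c \<noteq> 0\<close>] True by simp
next
  case False
  then have "s > 0" using s by simp
  then show ?thesis by (rule bind_pos[OF v])
qed

lemma alpha_bar_Suc: "alpha_bar \<beta> (Suc t) = alpha_bar \<beta> t * (1 - \<beta> (Suc t))"
  unfolding alpha_bar_def by (simp add: atLeastAtMostSuc_conv mult.commute)

lemma alpha_bar_bounds:
  assumes beta: "\<And>t. 1 \<le> t \<Longrightarrow> t \<le> T \<Longrightarrow> 0 < \<beta> t \<and> \<beta> t < 1"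
  shows "t \<le> T \<Longrightarrow> 0 < alpha_bar \<beta> t \<and> alpha_bar \<beta> t \<le> 1 \<and> (1 \<le> t \<longrightarrow> alpha_bar \<beta> t < 1)"
proof (induction t)
  case 0
  then show ?case by (simp add: alpha_bar_def)
next
  case (Suc t)
  then have IH: "0 < alpha_bar \<beta> t" "alpha_bar \<beta> t \<le> 1" by auto
  have b: "0 < \<beta> (Suc t)" "\<beta> (Suc t) < 1" using beta[of "Suc t"] Suc.prems by auto
  have "alpha_bar \<beta> t * (1 - \<beta> (Suc t)) < 1"
  proof -
    have "alpha_bar \<beta> t * (1 - \<beta> (Suc t)) \<le> 1 - \<beta> (Suc t)"
      using mult_right_mono[of "alpha_bar \<beta> t" 1 "1 - \<beta> (Suc t)"] IH b by simp
    then show ?thesis using b by linarith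
  qed
  moreover have "0 < alpha_bar \<beta> t * (1 - \<beta> (Suc t))" using IH b by simp
  ultimately show ?case by (simp add: alpha_bar_Suc)
qed

theorem mainTheorem4:
  fixes T :: nat and \<beta> \<sigma> :: "nat \<Rightarrow> real" and y0 f :: "real^'d"
  assumes beta: "\<And>t. 1 \<le> t \<Longrightarrow> t \<le> T \<Longrightarrow> 0 < \<beta> t \<and> \<beta> t < 1"
    and sigma_nonneg: "\<And>t. 2 \<le> t \<Longrightarrow> t \<le> T \<Longrightarrow> 0 \<le> \<sigma> t"
    and sigma_le: "\<And>t. 2 \<le> t \<Longrightarrow> t \<le> T \<Longrightarrow> 0 \<le> 1 - alpha_bar \<beta> (t - 1) - (\<sigma> t)^2"
  shows "\<forall>t. 1 \<le> t \<and> t \<le> T \<longrightarrow>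
    ddim_marginal T \<beta> \<sigma> y0 f t = iso_normal (card_mean \<beta> y0 f t) (1 - alpha_bar \<beta> t)"
proof -
  note ab = alpha_bar_bounds[OF beta]
  have main: "k < T \<Longrightarrow> ddim_back T \<beta> \<sigma> y0 f k = iso_normal (card_mean \<beta> y0 f (T - k)) (1 - alpha_bar \<beta> (T - k))" for k
  proof (induction k)
    case 0
    then show ?case by simp
  next
    case (Suc k)
    define t where "t = T - k"
    have t2: "2 \<le> t" "t \<le> T" using Suc.prems by (auto simp: t_def)
    have tk: "T - Suc k = t - 1" by (simp add: t_def)
    have v: "1 - alpha_bar \<beta> t > 0" using ab[of t] t2 by auto
    have v1: "1 - alpha_bar \<beta> (t - 1) > 0" using ab[of "t - 1"] t2 by auto
    define X where "X = 1 - alpha_bar \<beta> (t - 1) - (\<sigma> t)^2"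
    have X: "X \<ge> 0" using sigma_le[OF t2] by (simp add: X_def)
    define C where "C = sqrt X / sqrt (1 - alpha_bar \<beta> t)"
    have CC: "C^2 * (1 - alpha_bar \<beta> t) + (\<sigma> t)^2 = 1 - alpha_bar \<beta> (t - 1)"
      using X v by (simp add: C_def power_divide X_def)
    have mu: "card_mu \<beta> \<sigma> y0 f t yt = card_mean \<beta> y0 f (t - 1) + C *\<^sub>R (yt - card_mean \<beta> y0 f t)" for yt
      by (simp add: card_mu_def C_def X_def)
    have "ddim_back T \<beta> \<sigma> y0 f (Suc k)
       = iso_normal (card_mean \<beta> y0 f t) (1 - alpha_bar \<beta> t) \<bind>
           (\<lambda>yt. iso_normal (card_mean \<beta> y0 f (t - 1) + C *\<^sub>R (yt - card_mean \<beta> y0 f t)) ((\<sigma> t)^2))"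
      using Suc by (simp add: t_def[symmetric] mu)
    also have "\<dots> = iso_normal (card_mean \<beta> y0 f (t - 1)) (C^2 * (1 - alpha_bar \<beta> t) + (\<sigma> t)^2)"
      by (rule bind_gen[OF v sigma_nonneg[OF t2]]) (use CC v1 in simp)
    finally show ?case by (simp add: CC tk)
  qed
  show ?thesis
  proof (intro allI impI)
    fix t assume t: "1 \<le> t \<and> t \<le> T"
    then have "T - t < T" "T - (T - t) = t" by auto
    then show "ddim_marginal T \<beta> \<sigma> y0 f t = iso_normal (card_mean \<beta> y0 f t) (1 - alpha_bar \<beta> t)"
      unfolding ddim_marginal_def using main by metis
  qed
qed
end
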